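(* Let $D\subset\mathbb{R}^2$ be open, let $I\subset\mathbb{R}$ be an open interval, and let $\chi: D\times I\to\mathbb{R}^2$ be a $C^1$ map with $|\chi(x,t)|=1$ for all $(x,t)$. Let $R=\begin{bmatrix}0&-1\\1&0\end{bmatrix}$, write $\chi^{\perp}=R\chi$, let $\nabla\cdot\chi$ denote the divergence of $\chi(\cdot,t)$ with respect to $x$, and let $\partial_t\chi$ denote the partial derivative in $t$ at fixed $x$. Let $x:\mathbb{R}\times I\to D$, $(s,t)\mapsto x(s,t)$, be a $C^1$ map whose partial derivatives $\partial_s x$ and $\partial_t x$ are themselves $C^1$, and which satisfies $$\partial_s x(s,t)=\chi(x(s,t),t)\qquad\text{for all }(s,t).$$ Assume there is a $C^1$ function $\sigma:I\to(0,\infty)$ such that $x(s+\sigma(t),t)=x(s,t)$ for all $s,t$; thus for each $t$ the curve $s\mapsto x(s,t)$ is a closed, arclength-parametrized orbit of period $\sigma(t)$ of the direction field $\chi(\cdot,t)$. Assume further that $$\rho_2(t):=\exp\Big(\int_0^{\sigma(t)}\nabla\cdot\chi(x(\vartheta,t),t)\,d\vartheta\Big)\neq 1\qquad\text{for all } t\in I.$$ Define $$\psi(s,t):=\big\langle \chi^{\perp}(x(s,t),t),\,\partial_t\chi(x(s,t),t)\big\rangle,$$ $$\Pi^{\perp}(s,t):=\int_0^s \exp\Big(\int_\vartheta^s \nabla\cdot\chi(x(\tau,t),t)\,d\tau\Big)\,\psi(\vartheta,t)\,d\vartheta,$$ and let $$N(s,t):=\big\langle \partial_t x(s,t),\,\chi^{\perp}(x(s,t),t)\big\rangle$$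 be the normal velocity of the curve family. Then for all $s\in\mathbb{R}$ and $t\in I$, $$N(s,t)=\exp\Big(\int_0^s\nabla\cdot\chi(x(\vartheta,t),t)\,d\vartheta\Big)\,N(0,t)+\Pi^{\perp}(s,t),$$ and $$N(0,t)=\frac{\Pi^{\perp}(\sigma(t),t)}{1-\rho_2(t)}.$$ Moreover, suppose in addition that $\mu\in\mathbb{R}$ is a constant and $S: D\times I\to\mathbb{R}^{2\times 2}$ is a $C^1$ map with symmetric values such that $\langle\chi,(S-\mu I)\chi\rangle=0$ on $D\times I$. Then at every point $(x(s,t),t)$ where $\langle\chi,S\chi^{\perp}\rangle\neq0$, $$\psi(s,t)=-\frac{\langle\chi,\partial_tS\,\chi\rangle}{2\langle\chi,S\chi^{\perp}\rangle},$$ where $\chi$, $\chi^{\perp}$, $S$ and $\partial_t S$ are all evaluated at $(x(s,t),t)$.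
   Context: In the paper, the direction field is $\chi=\chi_\mu^{\pm}$, built from the eigenvalues $s_1\le s_2$ and unit eigenvectors $e_1$, $e_2=Re_1$ of the rate-of-strain tensor $S=\tfrac12(\nabla v+\nabla v^\top)$ of a planar unsteady velocity field $v(x,t)$: $$\chi_\mu^{\pm}=\sqrt{\tfrac{s_2-\mu}{s_2-s_1}}\,e_1\pm\sqrt{\tfrac{\mu-s_1}{s_2-s_1}}\,e_2 .$$ This field satisfies $\langle\chi,(S-\mu I)\chi\rangle=0$. Closed orbits (limit cycles) of such a field are called elliptic objective Eulerian coherent structures (OECSs). The pointwise material flux density through the moving curve is $$\varphi(x(s,t),t)=\langle v(x(s,t),t),\chi^\perp(x(s,t),t)\rangle-N(s,t).$$ The condition $\rho_2\neq1$ expresses hyperbolicity of the limit cycle: $\rho_2$ is its nontrivial Floquet multiplier. *)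

theory Defs
  imports "HOL-Analysis.Analysis"
begin

definition C1_on :: "'a::real_normed_vector set \<Rightarrow> ('a \<Rightarrow> 'b::real_normed_vector) \<Rightarrow> bool" where
  "C1_on S f \<longleftrightarrow> (\<exists>f' :: 'a \<Rightarrow> ('a \<Rightarrow>\<^sub>L 'b).
      (\<forall>z\<in>S. (f has_derivative blinfun_apply (f' z)) (at z)) \<and> continuous_on S f')"

definition oint :: "real \<Rightarrow> real \<Rightarrow> (real \<Rightarrow> real) \<Rightarrow> real" where
  "oint a b f = (if a \<le> b then integral {a..b} f else - integral {b..a} f)"

definition Rmat :: "real^2^2" where
  "Rmat = vector [vector [0, -1], vector [1, 0]]"

definition perp :: "real^2 \<Rightarrow> real^2" where
  "perp v = Rmat *v v"

definition divergence :: "(real^2 \<Rightarrow> real^2) \<Rightarrow> real^2 \<Rightarrow> real" where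
  "divergence F y = trace (jacobian F (at y))"

end

theory Submission
  imports Defs
begin

lemma hd_fst:
  assumes "((\<lambda>(u,v). F u v) has_derivative L) (at (a,b))"
  shows "((\<lambda>a'. F a' b) has_derivative (\<lambda>h. L (h,0))) (at a)"
proof -
  have "((\<lambda>a'. (a',b)) has_derivative (\<lambda>h. (h,0))) (at a)"
    by (auto intro!: derivative_eq_intros)
  from has_derivative_compose[OF this, of "\<lambda>(u,v). F u v" L] assms
  show ?thesis by (simp add: o_def)
qed

lemma hd_snd:
  assumes "((\<lambda>(u,v). F u v) has_derivative L) (at (a,b))"
  shows "((\<lambda>b'. F a b') has_derivative (\<lambda>h. L (0,h))) (at b)"
proof -
  have "((\<lambda>b'. (a,b')) has_derivative (\<lambda>h. (0,h))) (at b)"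
    by (auto intro!: derivative_eq_intros)
  from has_derivative_compose[OF this, of "\<lambda>(u,v). F u v" L] assms
  show ?thesis by (simp add: o_def)
qed

lemma hvd_snd:
  fixes F :: "'a::real_normed_vector \<Rightarrow> real \<Rightarrow> 'c::real_normed_vector"
  assumes "((\<lambda>(u,v). F u v) has_derivative L) (at (a,b))"
  shows "((\<lambda>b'. F a b') has_vector_derivative L (0,1)) (at b)"
proof -
  have lin: "linear L" using assms has_derivative_linear by blast
  have "L (0,h) = h *\<^sub>R L (0,1)" for h
  proof -
    have "L (h *\<^sub>R (0,1)) = h *\<^sub>R L (0,1)" by (rule linear_scale[OF lin])
    moreover have "h *\<^sub>R ((0::'a),(1::real)) = (0,h)" by simp
    ultimately show ?thesis by metis
  qed
  then have eq: "(\<lambda>h. L (0,h)) = (\<lambda>h. h *\<^sub>R L (0,1))" by (intro ext)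
  show ?thesis using hd_snd[OF assms] unfolding has_vector_derivative_def eq .
qed

lemma hvd_fst:
  fixes F :: "real \<Rightarrow> 'b::real_normed_vector \<Rightarrow> 'c::real_normed_vector"
  assumes "((\<lambda>(u,v). F u v) has_derivative L) (at (a,b))"
  shows "((\<lambda>a'. F a' b) has_vector_derivative L (1,0)) (at a)"
proof -
  have lin: "linear L" using assms has_derivative_linear by blast
  have "L (h,0) = h *\<^sub>R L (1,0)" for h
  proof -
    have "L (h *\<^sub>R (1,0)) = h *\<^sub>R L (1,0)" by (rule linear_scale[OF lin])
    moreover have "h *\<^sub>R ((1::real),(0::'b)) = (h,0)" by simp
    ultimately show ?thesis by metis
  qed
  then have eq: "(\<lambda>h. L (h,0)) = (\<lambda>h. h *\<^sub>R L (1,0))" by (intro ext)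
  show ?thesis using hd_fst[OF assms] unfolding has_vector_derivative_def eq .
qed

lemma bb_mv: "bounded_bilinear (\<lambda>(A::real^'n^'m) (v::real^'n). A *v v)"
  apply (rule bilinear_conv_bounded_bilinear[THEN iffD1])
  unfolding bilinear_def
  apply (intro conjI allI linearI)
  apply (simp_all add: matrix_vector_mult_add_rdistrib matrix_vector_right_distrib
      matrix_vector_mul_linear scaleR_matrix_vector_assoc matrix_vector_mult_scaleR)
  done


lemma perp_comp: "perp c $ 1 = - (c $ 2)" "perp c $ 2 = c $ 1"
  by (simp_all add: perp_def Rmat_def matrix_vector_mult_def sum_2 vector_2)

lemma inner2: "(u::real^2) \<bullet> v = u$1 * v$1 + u$2 * v$2"
  by (simp add: inner_vec_def sum_2)

lemma mv2: "((A::real^2^2) *v v) $ 1 = A$1$1 * v$1 + A$1$2 * v$2"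
   "((A::real^2^2) *v v) $ 2 = A$2$1 * v$1 + A$2$2 * v$2"
  by (simp_all add: matrix_vector_mult_def sum_2)

lemma trace2: "trace (A::real^2^2) = A$1$1 + A$2$2"
  by (simp add: trace_def sum_2)

lemma trace_id: fixes A :: "real^2^2" and v c :: "real^2"
  shows "(A *v v) \<bullet> perp c + v \<bullet> perp (A *v c) = trace A * (v \<bullet> perp c)"
  unfolding inner2 perp_comp mv2 trace2 by algebra

lemma perp_self: "perp c \<bullet> c = 0" "c \<bullet> perp c = 0"
  unfolding inner2 perp_comp by algebra+

lemma perp_perp: "perp c \<bullet> perp d = c \<bullet> d"
  unfolding inner2 perp_comp by algebra

lemma decomp2: assumes "(c::real^2) \<bullet> c = 1"
  shows "v = (v \<bullet> c) *\<^sub>R c + (v \<bullet> perp c) *\<^sub>R perp c"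
proof -
  have "c$1*c$1 + c$2*c$2 = 1" using assms unfolding inner2 .
  then show ?thesis
    unfolding vec_eq_iff forall_2 vector_add_component vector_scaleR_component inner2 perp_comp real_scaleR_def
    by algebra
qed

lemma sym_inner: assumes "transpose (S::real^2^2) = S" shows "x \<bullet> (S *v y) = (S *v x) \<bullet> y"
  by (metis assms dot_lmul_matrix transpose_matrix_vector)


lemma oint_ftc:
  fixes f F :: "real \<Rightarrow> real"
  assumes d: "\<And>s. (F has_real_derivative f s) (at s)"
  shows "oint a b f = F b - F a"
proof -
  have I: "integral {p..q} f = F q - F p" if "p \<le> q" for p q
  proof -
    have "(f has_integral (F q - F p)) {p..q}"
      apply (rule fundamental_theorem_of_calculus[OF that])
      using d by (auto simp: has_real_derivative_iff_has_vector_derivative[symmetric]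
          intro: has_field_derivative_at_within)
    then show ?thesis by (rule integral_unique)
  qed
  show ?thesis unfolding oint_def using I[of a b] I[of b a] by auto
qed

lemma oint_deriv:
  fixes f :: "real \<Rightarrow> real"
  assumes f: "continuous_on UNIV f"
  shows "((\<lambda>s. oint a s f) has_real_derivative f s0) (at s0)"
proof -
  define c where "c = min a s0 - 1"
  define b where "b = max a s0 + 1"
  have fc: "continuous_on {c..b} f" using f by (rule continuous_on_subset) auto
  have int: "f integrable_on {p..q}" for p q
    by (rule integrable_continuous_real) (rule continuous_on_subset[OF f], auto)
  have "((\<lambda>s. integral {c..s} f) has_real_derivative f s0) (at s0 within {c..b})"
    by (rule integral_has_real_derivative[OF fc]) (auto simp: c_def b_def)
  moreover have "at s0 within {c..b} = at s0"
    by (rule at_within_Icc_at) (auto simp: c_def b_def)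
  ultimately have "((\<lambda>s. integral {c..s} f) has_real_derivative f s0) (at s0)" by simp
  then have "((\<lambda>s. integral {c..s} f - integral {c..a} f) has_real_derivative f s0) (at s0)"
    by (auto intro!: derivative_eq_intros)
  then show ?thesis
  proof (rule has_field_derivative_transform_within_open[where S="{c<..}"])
    show "open {c<..}" by simp
    show "s0 \<in> {c<..}" by (auto simp: c_def)
    fix s assume s: "s \<in> {c<..}"
    have ca: "c \<le> a" by (auto simp: c_def)
    show "integral {c..s} f - integral {c..a} f = oint a s f"
    proof (cases "a \<le> s")
      case True
      have "integral {c..a} f + integral {a..s} f = integral {c..s} f"
        by (rule Henstock_Kurzweil_Integration.integral_combine[OF ca True int])
      then show ?thesis using True by (simp add: oint_def)
    next
      case False
      have "integral {c..s} f + integral {s..a} f = integral {c..a} f"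
        by (rule Henstock_Kurzweil_Integration.integral_combine) (use s False int in auto)
      then show ?thesis using False by (simp add: oint_def)
    qed
  qed
qed

lemma oint_split:
  fixes f :: "real \<Rightarrow> real"
  assumes f: "continuous_on UNIV f"
  shows "oint a b f = oint 0 b f - oint 0 a f"
  by (rule oint_ftc[OF oint_deriv[OF f]])

lemma oint_cmult: "oint a b (\<lambda>x. c * g x) = c * oint a b g"
  by (simp add: oint_def)


lemma lin_ode:
  fixes N d p :: "real \<Rightarrow> real"
  assumes dN: "\<And>s. (N has_real_derivative (d s * N s + p s)) (at s)"
    and d: "continuous_on UNIV d" and p: "continuous_on UNIV p"
  shows "N s = exp (oint 0 s d) * N 0 + oint 0 s (\<lambda>\<theta>. exp (oint \<theta> s d) * p \<theta>)"
proof -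
  define \<Phi> where "\<Phi> s = oint 0 s d" for s
  have dP: "(\<Phi> has_real_derivative d s) (at s)" for s
    unfolding \<Phi>_def by (rule oint_deriv[OF d])
  have cP: "continuous_on UNIV \<Phi>"
    using dP by (meson DERIV_continuous continuous_at_imp_continuous_on)
  define q where "q \<theta> = exp (- \<Phi> \<theta>) * p \<theta>" for \<theta>
  have cq: "continuous_on UNIV q" unfolding q_def
    by (intro continuous_intros cP p)
  define K where "K s = N s * exp (- \<Phi> s) - oint 0 s q" for s
  have "(K has_real_derivative 0) (at s)" for s
    unfolding K_def
    by (rule derivative_eq_intros dN dP oint_deriv[OF cq] refl)+
       (simp add: q_def algebra_simps)
  then have "K s = K 0" by (intro DERIV_isconst_all) auto
  then have K0: "N s * exp (- \<Phi> s) - oint 0 s q = N 0"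
    by (simp add: K_def \<Phi>_def oint_def)
  have "oint 0 s (\<lambda>\<theta>. exp (oint \<theta> s d) * p \<theta>) = oint 0 s (\<lambda>\<theta>. exp (\<Phi> s) * q \<theta>)"
  proof -
    have "(\<lambda>\<theta>. exp (oint \<theta> s d) * p \<theta>) = (\<lambda>\<theta>. exp (\<Phi> s) * q \<theta>)"
    proof
      fix \<theta>
      have "oint \<theta> s d = \<Phi> s - \<Phi> \<theta>" unfolding \<Phi>_def by (rule oint_split[OF d])
      then show "exp (oint \<theta> s d) * p \<theta> = exp (\<Phi> s) * q \<theta>"
        by (simp add: q_def exp_diff exp_minus field_simps flip: exp_add)
    qed
    then show ?thesis by simp
  qed
  also have "\<dots> = exp (\<Phi> s) * oint 0 s q" by (rule oint_cmult)
  finally have "oint 0 s (\<lambda>\<theta>. exp (oint \<theta> s d) * p \<theta>) = exp (\<Phi> s) * oint 0 s q" .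
  moreover have "N s = exp (\<Phi> s) * N 0 + exp (\<Phi> s) * oint 0 s q"
    using K0 by (simp add: exp_minus field_simps)
  ultimately show ?thesis by (simp add: \<Phi>_def)
qed


lemma vd_chain:
  fixes f :: "real \<Rightarrow> 'a::real_normed_vector"
  assumes f: "(f has_vector_derivative f') (at x)" and g: "(g has_derivative L) (at (f x))"
  shows "((\<lambda>y. g (f y)) has_vector_derivative L f') (at x)"
proof -
  have lin: "linear L" using g has_derivative_linear by blast
  have c: "((\<lambda>y. g (f y)) has_derivative (\<lambda>h. L (h *\<^sub>R f'))) (at x)"
    using has_derivative_compose[OF f[unfolded has_vector_derivative_def] g] .
  have eq: "(\<lambda>h. L (h *\<^sub>R f')) = (\<lambda>h. h *\<^sub>R L f')"
    by (intro ext) (simp add: linear_scale[OF lin])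
  show ?thesis using c unfolding has_vector_derivative_def eq .
qed

lemma cont_test:
  fixes Dc :: "'a::real_normed_vector \<Rightarrow> ('a \<Rightarrow>\<^sub>L 'b::real_normed_vector)"
  assumes "continuous_on T Dc" "continuous_on S g" "g ` S \<subseteq> T" "continuous_on S h"
  shows "continuous_on S (\<lambda>s. blinfun_apply (Dc (g s)) (h s))"
  by (intro continuous_intros continuous_on_compose2[OF assms(1)] assms)

theorem mainTheorem1:
  fixes D :: "(real^2) set" and I :: "real set"
    and chi :: "real^2 \<Rightarrow> real \<Rightarrow> real^2"
    and x :: "real \<Rightarrow> real \<Rightarrow> real^2"
    and \<sigma> :: "real \<Rightarrow> real"
  assumes D_open: "open D"
    and I_open: "open I" and I_interval: "is_interval I"
    and chi_C1: "C1_on (D \<times> I) (\<lambda>(y, t). chi y t)"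
    and chi_unit: "\<forall>y\<in>D. \<forall>t\<in>I. norm (chi y t) = 1"
    and x_in_D: "\<forall>s. \<forall>t\<in>I. x s t \<in> D"
    and x_C1: "C1_on (UNIV \<times> I) (\<lambda>(s, t). x s t)"
    and xs_C1: "C1_on (UNIV \<times> I) (\<lambda>(s, t). vector_derivative (\<lambda>r. x r t) (at s))"
    and xt_C1: "C1_on (UNIV \<times> I) (\<lambda>(s, t). vector_derivative (\<lambda>r. x s r) (at t))"
    and x_orbit: "\<forall>s. \<forall>t\<in>I. vector_derivative (\<lambda>r. x r t) (at s) = chi (x s t) t"
    and \<sigma>_C1: "C1_on I \<sigma>"
    and \<sigma>_pos: "\<forall>t\<in>I. \<sigma> t > 0"
    and x_periodic: "\<forall>s. \<forall>t\<in>I. x (s + \<sigma> t) t = x s t"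
    and hyperbolic: "\<forall>t\<in>I. exp (oint 0 (\<sigma> t) (\<lambda>\<theta>. divergence (\<lambda>y. chi y t) (x \<theta> t))) \<noteq> 1"
  shows
    "(let \<rho>\<^sub>2 = (\<lambda>t. exp (oint 0 (\<sigma> t) (\<lambda>\<theta>. divergence (\<lambda>y. chi y t) (x \<theta> t))));
          \<psi> = (\<lambda>s t. perp (chi (x s t) t) \<bullet> vector_derivative (\<lambda>r. chi (x s t) r) (at t));
          PiPerp = (\<lambda>s t. oint 0 s (\<lambda>\<theta>. exp (oint \<theta> s (\<lambda>\<tau>. divergence (\<lambda>y. chi y t) (x \<tau> t))) * \<psi> \<theta> t));
          N = (\<lambda>s t. vector_derivative (\<lambda>r. x s r) (at t) \<bullet> perp (chi (x s t) t))
      in (\<forall>s. \<forall>t\<in>I.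
            N s t = exp (oint 0 s (\<lambda>\<theta>. divergence (\<lambda>y. chi y t) (x \<theta> t))) * N 0 t + PiPerp s t)
       \<and> (\<forall>t\<in>I. N 0 t = PiPerp (\<sigma> t) t / (1 - \<rho>\<^sub>2 t))
       \<and> (\<forall>(\<mu>::real) (S :: real^2 \<Rightarrow> real \<Rightarrow> real^2^2).
            C1_on (D \<times> I) (\<lambda>(y, t). S y t)
            \<and> (\<forall>y\<in>D. \<forall>t\<in>I. transpose (S y t) = S y t)
            \<and> (\<forall>y\<in>D. \<forall>t\<in>I. chi y t \<bullet> ((S y t - \<mu> *\<^sub>R mat 1) *v chi y t) = 0)
            \<longrightarrow> (\<forall>s. \<forall>t\<in>I.
                  chi (x s t) t \<bullet> (S (x s t) t *v perp (chi (x s t) t)) \<noteq> 0 \<longrightarrow>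
                  \<psi> s t = - (chi (x s t) t \<bullet> (vector_derivative (\<lambda>r. S (x s t) r) (at t) *v chi (x s t) t))
                           / (2 * (chi (x s t) t \<bullet> (S (x s t) t *v perp (chi (x s t) t)))))))"
proof -
  obtain Dc where Dc: "\<And>z. z \<in> D \<times> I \<Longrightarrow> ((\<lambda>(y, t). chi y t) has_derivative blinfun_apply (Dc z)) (at z)"
    and cDc: "continuous_on (D \<times> I) Dc"
    using chi_C1 unfolding C1_on_def by blast
  obtain Dx where Dx: "\<And>z. z \<in> UNIV \<times> I \<Longrightarrow> ((\<lambda>(s, t). x s t) has_derivative blinfun_apply (Dx z)) (at z)"
    and cDx: "continuous_on (UNIV \<times> I) Dx"
    using x_C1 unfolding C1_on_def by blast
  obtain Dsg where Dsg: "\<And>t. t \<in> I \<Longrightarrow> (\<sigma> has_derivative blinfun_apply (Dsg t)) (at t)"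
    using \<sigma>_C1 unfolding C1_on_def by blast
  define xt where "xt s t = vector_derivative (\<lambda>r. x s r) (at t)" for s t
  have hx_s: "((\<lambda>r. x r t) has_vector_derivative chi (x s t) t) (at s)" if "t \<in> I" for s t
  proof -
    have "((\<lambda>r. x r t) has_vector_derivative Dx (s,t) (1,0)) (at s)"
      by (rule hvd_fst[OF Dx]) (use that in auto)
    moreover then have "Dx (s,t) (1,0) = chi (x s t) t"
      using x_orbit that vector_derivative_at by metis
    ultimately show ?thesis by simp
  qed
  have hx_t: "((\<lambda>r. x s r) has_vector_derivative xt s t) (at t)"
    and xt_eq: "xt s t = Dx (s,t) (0,1)" if "t \<in> I" for s t
  proof -
    have "((\<lambda>r. x s r) has_vector_derivative Dx (s,t) (0,1)) (at t)"
      by (rule hvd_snd[OF Dx]) (use that in auto)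
    then show "xt s t = Dx (s,t) (0,1)" unfolding xt_def by (rule vector_derivative_at)
    then show "((\<lambda>r. x s r) has_vector_derivative xt s t) (at t)"
      using \<open>((\<lambda>r. x s r) has_vector_derivative Dx (s,t) (0,1)) (at t)\<close> by simp
  qed
  have cx: "continuous_on (UNIV \<times> I) (\<lambda>z. x (fst z) (snd z))"
  proof (rule continuous_at_imp_continuous_on, rule ballI)
    fix z :: "real \<times> real" assume "z \<in> UNIV \<times> I"
    from has_derivative_continuous[OF Dx[OF this]]
    show "isCont (\<lambda>z. x (fst z) (snd z)) z" by (simp add: case_prod_beta')
  qed
  have cxt: "continuous_on (UNIV \<times> I) (\<lambda>z. xt (fst z) (snd z))"
  proof -
    have "continuous_on (UNIV \<times> I) (\<lambda>z. Dx z (0,1))" by (intro continuous_intros cDx)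
    then show ?thesis by (rule continuous_on_eq) (auto simp: xt_eq)
  qed
  have chi_y: "((\<lambda>y. chi y t) has_derivative (\<lambda>h. Dc (y,t) (h,0))) (at y)"
    if "y \<in> D" "t \<in> I" for y t
    by (rule hd_fst[OF Dc]) (use that in auto)
  have chi_t: "((\<lambda>r. chi y r) has_vector_derivative Dc (y,t) (0,1)) (at t)"
    if "y \<in> D" "t \<in> I" for y t
    by (rule hvd_snd[OF Dc]) (use that in auto)
  define G where "G r t = Dc (x r t, t) (xt r t, 1)" for r t
  have hG: "((\<lambda>t. chi (x r t) t) has_vector_derivative G r t) (at t)" if "t \<in> I" for r t
  proof -
    have "((\<lambda>t. (x r t, t)) has_vector_derivative (xt r t, 1)) (at t)"
      by (intro has_vector_derivative_Pair hx_t that has_vector_derivative_id)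
    from vd_chain[OF this Dc] show ?thesis using that x_in_D by (simp add: G_def)
  qed
  have cG: "continuous_on (UNIV \<times> I) (\<lambda>z. G (fst z) (snd z))"
    unfolding G_def
    apply (intro continuous_intros continuous_on_compose2[OF cDc] cx cxt)
    using x_in_D by auto
  have cchi: "continuous_on (D \<times> I) (\<lambda>z. chi (fst z) (snd z))"
  proof (rule continuous_at_imp_continuous_on, rule ballI)
    fix z :: "(real^2) \<times> real" assume "z \<in> D \<times> I"
    from has_derivative_continuous[OF Dc[OF this]]
    show "isCont (\<lambda>z. chi (fst z) (snd z)) z" by (simp add: case_prod_beta')
  qed
  have cx_s: "continuous_on UNIV (\<lambda>r. x r t)" if "t \<in> I" for t
  proof -
    have 1: "continuous_on UNIV (\<lambda>r. (r,t))" by (intro continuous_intros)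
    show ?thesis using continuous_on_compose2[OF cx 1] that by auto
  qed
  have cchi_s: "continuous_on UNIV (\<lambda>r. chi (x r t) t)" if "t \<in> I" for t
  proof -
    have 1: "continuous_on UNIV (\<lambda>r. (x r t,t))" by (intro continuous_intros cx_s that)
    show ?thesis using continuous_on_compose2[OF cchi 1] that x_in_D by auto
  qed
  have ftc: "x b t - x a t = integral {a..b} (\<lambda>r. chi (x r t) t)" if "a \<le> b" "t \<in> I" for a b t
  proof -
    have "((\<lambda>r. chi (x r t) t) has_integral (x b t - x a t)) {a..b}"
      by (rule fundamental_theorem_of_calculus[OF that(1)])
        (use hx_s[OF that(2)] has_vector_derivative_at_within in blast)
    then show ?thesis by (simp add: integral_unique)
  qed
  have convI: "convex I" using I_interval by (rule is_interval_convex)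
  have xt_int: "xt b t0 - xt a t0 = integral {a..b} (\<lambda>r. G r t0)" if "a \<le> b" "t0 \<in> I" for a b t0
  proof -
    have "((\<lambda>t. integral (cbox a b) (\<lambda>r. chi (x r t) t)) has_vector_derivative
        integral (cbox a b) (\<lambda>r. G r t0)) (at t0 within I)"
    proof (rule leibniz_rule_vector_derivative[where f="\<lambda>t r. chi (x r t) t" and fx="\<lambda>t r. G r t"])
      show "((\<lambda>t. chi (x r t) t) has_vector_derivative G r t) (at t within I)" if "t \<in> I" for t r
        using hG[OF that] has_vector_derivative_at_within by blast
      show "(\<lambda>r. chi (x r t) t) integrable_on cbox a b" if "t \<in> I" for t
        by (rule integrable_continuous) (rule continuous_on_subset[OF cchi_s[OF that]], auto)
      have 1: "continuous_on (I \<times> cbox a b) (\<lambda>z. (snd z, fst z))" by (intro continuous_intros)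
      have 2: "(\<lambda>z. (snd z, fst z)) ` (I \<times> cbox a b) \<subseteq> UNIV \<times> I" by auto
      show "continuous_on (I \<times> cbox a b) (\<lambda>(t, r). G r t)"
        using continuous_on_compose2[OF cG 1 2] by (simp add: case_prod_beta')
    qed (use that convI in auto)
    then have d1: "((\<lambda>t. integral {a..b} (\<lambda>r. chi (x r t) t)) has_vector_derivative
        integral {a..b} (\<lambda>r. G r t0)) (at t0)"
      using at_within_open[OF that(2) I_open] by (simp add: cbox_interval)
    have d2: "((\<lambda>t. x b t - x a t) has_vector_derivative xt b t0 - xt a t0) (at t0)"
      by (intro derivative_intros hx_t that)
    have d3: "((\<lambda>t. x b t - x a t) has_vector_derivative integral {a..b} (\<lambda>r. G r t0)) (at t0)"
      by (rule has_vector_derivative_transform_within_open[OF d1 I_open that(2)])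
        (simp add: ftc that)
    show ?thesis using vector_derivative_unique_at[OF d2 d3] .
  qed
  have hxt_s: "((\<lambda>s. xt s t) has_vector_derivative G s0 t) (at s0)" if "t \<in> I" for s0 t
  proof -
    define a where "a = s0 - 1"
    define b where "b = s0 + 1"
    have 1: "continuous_on {a..b} (\<lambda>r. (r,t))" by (intro continuous_intros)
    have 2: "(\<lambda>r. (r,t)) ` {a..b} \<subseteq> UNIV \<times> I" using that by auto
    have cGt: "continuous_on {a..b} (\<lambda>r. G r t)"
      using continuous_on_compose2[OF cG 1 2] by simp
    have "((\<lambda>u. integral {a..u} (\<lambda>r. G r t)) has_vector_derivative G s0 t) (at s0 within {a..b})"
      by (rule integral_has_vector_derivative[OF cGt]) (auto simp: a_def b_def)
    moreover have "at s0 within {a..b} = at s0"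
      by (rule at_within_Icc_at) (auto simp: a_def b_def)
    ultimately have "((\<lambda>u. xt a t + integral {a..u} (\<lambda>r. G r t)) has_vector_derivative G s0 t) (at s0)"
      by (auto intro!: derivative_eq_intros)
    then show ?thesis
    proof (rule has_vector_derivative_transform_within_open[where S="{a<..}"])
      fix y assume "y \<in> {a<..}"
      then have "xt y t - xt a t = integral {a..y} (\<lambda>r. G r t)" using xt_int[of a y t] that by auto
      then show "xt a t + integral {a..y} (\<lambda>r. G r t) = xt y t" by (simp add: algebra_simps)
    qed (auto simp: a_def)
  qed
  have perp_lin: "bounded_linear perp"
  proof -
    have "perp = (*v) Rmat" by (intro ext) (simp add: perp_def)
    then show ?thesis using matrix_vector_mul_bounded_linear[of Rmat] by metis
  qed
  have perp_hd: "(perp has_derivative perp) (at z)" for z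
    by (rule bounded_linear_imp_has_derivative[OF perp_lin])
  have mat_app: "matrix (\<lambda>h. Dc (y,t) (h,0)) *v v = Dc (y,t) (v,0)" if "y \<in> D" "t \<in> I" for y t v
  proof -
    have "bounded_linear (\<lambda>h. Dc (y,t) (h,0))"
      using chi_y[OF that] has_derivative_bounded_linear by blast
    from fun_cong[OF matrix_vector_mul(3)[OF this], of v] show ?thesis .
  qed
  have div_eq: "divergence (\<lambda>y. chi y t) y = trace (matrix (\<lambda>h. Dc (y,t) (h,0)))"
    if "y \<in> D" "t \<in> I" for y t
    unfolding divergence_def jacobian_def frechet_derivative_at[OF chi_y[OF that], symmetric] ..
  have div_eq2: "divergence (\<lambda>y. chi y t) y = Dc (y,t) (axis 1 1, 0) $ 1 + Dc (y,t) (axis 2 1, 0) $ 2"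
    if "y \<in> D" "t \<in> I" for y t
    unfolding div_eq[OF that] trace2 by (simp add: matrix_def)
  have vdchi: "vector_derivative (\<lambda>r. chi y r) (at t) = Dc (y,t) (0,1)" if "y \<in> D" "t \<in> I" for y t
    by (rule vector_derivative_at[OF chi_t[OF that]])
  have cDcs: "continuous_on UNIV (\<lambda>\<theta>. Dc (x \<theta> t, t))" if "t \<in> I" for t
  proof -
    have 1: "continuous_on UNIV (\<lambda>r. (x r t,t))" by (intro continuous_intros cx_s that)
    have 2: "(\<lambda>r. (x r t,t)) ` UNIV \<subseteq> D \<times> I" using that x_in_D by auto
    show ?thesis using continuous_on_compose2[OF cDc 1 2] by simp
  qed
  have Nderiv: "((\<lambda>s. xt s t \<bullet> perp (chi (x s t) t)) has_real_derivative
      (divergence (\<lambda>y. chi y t) (x s t) * (xt s t \<bullet> perp (chi (x s t) t))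
       + perp (chi (x s t) t) \<bullet> vector_derivative (\<lambda>r. chi (x s t) r) (at t))) (at s)"
    if t: "t \<in> I" for s t
  proof -
    define y where "y = x s t"
    have y: "y \<in> D" using x_in_D t by (simp add: y_def)
    define M where "M = matrix (\<lambda>h. Dc (y,t) (h,0))"
    have h1: "((\<lambda>s. chi (x s t) t) has_vector_derivative Dc (y,t) (chi y t, 0)) (at s)"
      using vd_chain[OF hx_s[OF t] chi_y[OF _ t]] x_in_D t by (simp add: y_def)
    have h2: "((\<lambda>s. perp (chi (x s t) t)) has_vector_derivative perp (Dc (y,t) (chi y t, 0))) (at s)"
      using vd_chain[OF h1 perp_hd] .
    have h3: "((\<lambda>s. xt s t \<bullet> perp (chi (x s t) t)) has_vector_derivative
        (xt s t \<bullet> perp (Dc (y,t) (chi y t, 0)) + G s t \<bullet> perp (chi (x s t) t))) (at s)"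
      using bounded_bilinear.has_vector_derivative[OF bounded_bilinear_inner hxt_s[OF t] h2] .
    have Gs: "G s t = Dc (y,t) (xt s t, 0) + Dc (y,t) (0,1)"
      unfolding G_def y_def by (simp add: blinfun.add_right[symmetric])
    have "xt s t \<bullet> perp (Dc (y,t) (chi y t, 0)) + G s t \<bullet> perp (chi (x s t) t)
        = (M *v xt s t) \<bullet> perp (chi y t) + xt s t \<bullet> perp (M *v chi y t) + perp (chi y t) \<bullet> Dc (y,t) (0,1)"
      unfolding Gs M_def mat_app[OF y t] by (simp add: y_def inner_add_left inner_add_right inner_commute)
    also have "\<dots> = divergence (\<lambda>y. chi y t) y * (xt s t \<bullet> perp (chi y t)) + perp (chi y t) \<bullet> Dc (y,t) (0,1)"
      unfolding trace_id M_def div_eq[OF y t] ..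
    finally show ?thesis using h3 vdchi[OF y t]
      by (simp add: has_real_derivative_iff_has_vector_derivative y_def)
  qed
  have cd_t: "continuous_on UNIV (\<lambda>\<theta>. divergence (\<lambda>y. chi y t) (x \<theta> t))" if t: "t \<in> I" for t
  proof -
    have "continuous_on UNIV (\<lambda>\<theta>. Dc (x \<theta> t, t) (axis 1 1, 0) $ 1 + Dc (x \<theta> t, t) (axis 2 1, 0) $ 2)"
      by (intro continuous_intros cDcs t)
    then show ?thesis by (rule continuous_on_eq) (use div_eq2 x_in_D t in auto)
  qed
  have cp_t: "continuous_on UNIV (\<lambda>\<theta>. perp (chi (x \<theta> t) t) \<bullet> vector_derivative (\<lambda>r. chi (x \<theta> t) r) (at t))"
    if t: "t \<in> I" for t
  proof -
    have "continuous_on UNIV (\<lambda>\<theta>. perp (chi (x \<theta> t) t) \<bullet> Dc (x \<theta> t, t) (0,1))"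
      by (intro continuous_intros cDcs t bounded_linear.continuous_on[OF perp_lin] cchi_s)
    then show ?thesis by (rule continuous_on_eq) (use vdchi x_in_D t in auto)
  qed
  have P1: "xt s t \<bullet> perp (chi (x s t) t) =
      exp (oint 0 s (\<lambda>\<theta>. divergence (\<lambda>y. chi y t) (x \<theta> t))) * (xt 0 t \<bullet> perp (chi (x 0 t) t))
      + oint 0 s (\<lambda>\<theta>. exp (oint \<theta> s (\<lambda>\<tau>. divergence (\<lambda>y. chi y t) (x \<tau> t))) *
           (perp (chi (x \<theta> t) t) \<bullet> vector_derivative (\<lambda>r. chi (x \<theta> t) r) (at t)))"
    if t: "t \<in> I" for s t
    by (rule lin_ode[where N="\<lambda>s. xt s t \<bullet> perp (chi (x s t) t)", OF Nderiv[OF t] cd_t[OF t] cp_t[OF t]])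
  have Dx10: "Dx (s,t) (1,0) = chi (x s t) t" if "t \<in> I" for s t
  proof -
    have "((\<lambda>r. x r t) has_vector_derivative Dx (s,t) (1,0)) (at s)"
      by (rule hvd_fst[OF Dx]) (use that in auto)
    from vector_derivative_unique_at[OF this hx_s[OF that]] show ?thesis .
  qed
  have Nper: "xt (\<sigma> t) t \<bullet> perp (chi (x (\<sigma> t) t) t) = xt 0 t \<bullet> perp (chi (x 0 t) t)"
    if t: "t \<in> I" for t
  proof -
    define sp where "sp = Dsg t 1"
    have lin: "linear (blinfun_apply (Dsg t))" using Dsg[OF t] has_derivative_linear by blast
    have eq: "blinfun_apply (Dsg t) = (\<lambda>h. h *\<^sub>R sp)"
      by (intro ext) (metis lin linear_scale mult.right_neutral real_scaleR_def sp_def)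
    have hs: "(\<sigma> has_vector_derivative sp) (at t)"
      using Dsg[OF t] unfolding has_vector_derivative_def eq .
    have hp: "((\<lambda>t'. (\<sigma> t', t')) has_vector_derivative (sp, 1)) (at t)"
      by (intro has_vector_derivative_Pair hs has_vector_derivative_id)
    have hc: "((\<lambda>t'. x (\<sigma> t') t') has_vector_derivative Dx (\<sigma> t, t) (sp, 1)) (at t)"
      using vd_chain[OF hp Dx[of "(\<sigma> t, t)"]] t by simp
    have "Dx (\<sigma> t, t) (sp, 1) = Dx (\<sigma> t, t) (sp *\<^sub>R (1,0)) + Dx (\<sigma> t, t) (0,1)"
      by (simp add: blinfun.add_right[symmetric])
    also have "\<dots> = sp *\<^sub>R chi (x (\<sigma> t) t) t + xt (\<sigma> t) t"
      by (simp only: blinfun.scaleR_right Dx10[OF t] xt_eq[OF t])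
    finally have hc': "((\<lambda>t'. x (\<sigma> t') t') has_vector_derivative sp *\<^sub>R chi (x (\<sigma> t) t) t + xt (\<sigma> t) t) (at t)"
      using hc by simp
    have hc2: "((\<lambda>t'. x (\<sigma> t') t') has_vector_derivative xt 0 t) (at t)"
    proof (rule has_vector_derivative_transform_within_open[OF hx_t[OF t] I_open t])
      fix t' assume "t' \<in> I"
      then show "x 0 t' = x (\<sigma> t') t'" using x_periodic by (metis add_0)
    qed
    have E: "sp *\<^sub>R chi (x (\<sigma> t) t) t + xt (\<sigma> t) t = xt 0 t"
      by (rule vector_derivative_unique_at[OF hc' hc2])
    have X: "x (\<sigma> t) t = x 0 t" using x_periodic t by (metis add_0)
    have "xt (\<sigma> t) t = xt 0 t - sp *\<^sub>R chi (x 0 t) t" using E X by (simp add: algebra_simps)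
    then show ?thesis using X by (simp add: inner_diff_left perp_self)
  qed
  have P3: "perp (chi y t) \<bullet> vector_derivative (\<lambda>r. chi y r) (at t) =
      - (chi y t \<bullet> (vector_derivative (\<lambda>r. S y r) (at t) *v chi y t)) / (2 * (chi y t \<bullet> (S y t *v perp (chi y t))))"
    if S_C1: "C1_on (D \<times> I) (\<lambda>(y, t). S y t)"
      and Ssym: "\<forall>y\<in>D. \<forall>t\<in>I. transpose (S y t) = S y t"
      and Scons: "\<forall>y\<in>D. \<forall>t\<in>I. chi y t \<bullet> ((S y t - \<mu> *\<^sub>R mat 1) *v chi y t) = 0"
      and y: "y \<in> D" and t: "t \<in> I" and q: "chi y t \<bullet> (S y t *v perp (chi y t)) \<noteq> 0"
    for y t \<mu> and S :: "real^2 \<Rightarrow> real \<Rightarrow> real^2^2"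
  proof -
    obtain DS where DS: "\<And>z. z \<in> D \<times> I \<Longrightarrow> ((\<lambda>(y, t). S y t) has_derivative blinfun_apply (DS z)) (at z)"
      using S_C1 unfolding C1_on_def by blast
    define St where "St = DS (y,t) (0,1)"
    have hS: "((\<lambda>r. S y r) has_vector_derivative St) (at t)"
      unfolding St_def by (rule hvd_snd[OF DS]) (use y t in auto)
    define ct where "ct = Dc (y,t) (0,1)"
    have hc: "((\<lambda>r. chi y r) has_vector_derivative ct) (at t)"
      unfolding ct_def by (rule chi_t[OF y t])
    define c where "c = chi y t"
    define p where "p = perp c"
    have unit: "chi y r \<bullet> chi y r = 1" if "r \<in> I" for r
      using chi_unit y that by (metis norm_eq_sqrt_inner real_sqrt_eq_1_iff)
    have d1: "((\<lambda>r. chi y r \<bullet> chi y r) has_vector_derivative (c \<bullet> ct + ct \<bullet> c)) (at t)"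
      using bounded_bilinear.has_vector_derivative[OF bounded_bilinear_inner hc hc] by (simp add: c_def)
    have d1': "((\<lambda>r. chi y r \<bullet> chi y r) has_vector_derivative 0) (at t)"
      by (rule has_vector_derivative_transform_within_open[OF has_vector_derivative_const I_open t])
        (simp add: unit)
    have cct: "c \<bullet> ct = 0"
      using vector_derivative_unique_at[OF d1 d1'] by (simp add: inner_commute)
    have cons2: "chi y r \<bullet> (S y r *v chi y r) = \<mu>" if "r \<in> I" for r
    proof -
      have "(S y r - \<mu> *\<^sub>R mat 1) *v chi y r = S y r *v chi y r - \<mu> *\<^sub>R chi y r"
        by (simp add: matrix_vector_mult_diff_rdistrib scaleR_matrix_vector_assoc[symmetric])
      moreover have "chi y r \<bullet> ((S y r - \<mu> *\<^sub>R mat 1) *v chi y r) = 0" using Scons y that by blast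
      ultimately have "chi y r \<bullet> (S y r *v chi y r) - \<mu> * (chi y r \<bullet> chi y r) = 0"
        by (simp only: inner_diff_right inner_scaleR_right)
      then show ?thesis using unit[OF that] by simp
    qed
    have d2: "((\<lambda>r. chi y r \<bullet> (S y r *v chi y r)) has_vector_derivative
        (c \<bullet> (S y t *v ct + St *v c) + ct \<bullet> (S y t *v c))) (at t)"
      using bounded_bilinear.has_vector_derivative[OF bounded_bilinear_inner hc
          bounded_bilinear.has_vector_derivative[OF bb_mv hS hc]] by (simp add: c_def)
    have d2': "((\<lambda>r. chi y r \<bullet> (S y r *v chi y r)) has_vector_derivative 0) (at t)"
      by (rule has_vector_derivative_transform_within_open[OF has_vector_derivative_const I_open t])
        (simp add: cons2)
    have Z: "c \<bullet> (S y t *v ct + St *v c) + ct \<bullet> (S y t *v c) = 0"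
      using vector_derivative_unique_at[OF d2 d2'] .
    have cc: "c \<bullet> c = 1" using unit[OF t] by (simp add: c_def)
    define w where "w = ct \<bullet> p"
    have ctd: "ct = w *\<^sub>R p"
      using decomp2[OF cc, of ct] cct by (simp add: w_def p_def inner_commute)
    have sy: "transpose (S y t) = S y t" using Ssym y t by blast
    have "p \<bullet> (S y t *v c) = c \<bullet> (S y t *v p)"
      using sym_inner[OF sy, of p c] by (simp add: inner_commute)
    then have "2 * w * (c \<bullet> (S y t *v p)) + c \<bullet> (St *v c) = 0"
      using Z unfolding ctd
      by (simp add: inner_add_right matrix_vector_mult_scaleR algebra_simps)
    moreover have "vector_derivative (\<lambda>r. S y r) (at t) = St" by (rule vector_derivative_at[OF hS])
    moreover have "vector_derivative (\<lambda>r. chi y r) (at t) = ct" by (rule vector_derivative_at[OF hc])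
    ultimately show ?thesis using q
      by (simp add: c_def p_def w_def inner_commute field_simps)
  qed
  show ?thesis unfolding Let_def
  proof (intro conjI allI ballI impI)
    fix s t assume t: "t \<in> I"
    show "vector_derivative (\<lambda>r. x s r) (at t) \<bullet> perp (chi (x s t) t) =
      exp (oint 0 s (\<lambda>\<theta>. divergence (\<lambda>y. chi y t) (x \<theta> t))) * (vector_derivative (\<lambda>r. x 0 r) (at t) \<bullet> perp (chi (x 0 t) t))
      + oint 0 s (\<lambda>\<theta>. exp (oint \<theta> s (\<lambda>\<tau>. divergence (\<lambda>y. chi y t) (x \<tau> t))) *
           (perp (chi (x \<theta> t) t) \<bullet> vector_derivative (\<lambda>r. chi (x \<theta> t) r) (at t)))"
      using P1[OF t] unfolding xt_def .
  next
    fix t assume t: "t \<in> I"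
    define E where "E = exp (oint 0 (\<sigma> t) (\<lambda>\<theta>. divergence (\<lambda>y. chi y t) (x \<theta> t)))"
    define Pi where "Pi = oint 0 (\<sigma> t) (\<lambda>\<theta>. exp (oint \<theta> (\<sigma> t) (\<lambda>\<tau>. divergence (\<lambda>y. chi y t) (x \<tau> t))) *
           (perp (chi (x \<theta> t) t) \<bullet> vector_derivative (\<lambda>r. chi (x \<theta> t) r) (at t)))"
    define N0 where "N0 = xt 0 t \<bullet> perp (chi (x 0 t) t)"
    have "N0 = E * N0 + Pi" using P1[OF t, of "\<sigma> t"] Nper[OF t]
      unfolding E_def Pi_def N0_def by simp
    moreover have "E \<noteq> 1" using hyperbolic t unfolding E_def by blast
    ultimately have "N0 = Pi / (1 - E)" by (simp add: field_simps)
    then show "vector_derivative (\<lambda>r. x 0 r) (at t) \<bullet> perp (chi (x 0 t) t) =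
      oint 0 (\<sigma> t) (\<lambda>\<theta>. exp (oint \<theta> (\<sigma> t) (\<lambda>\<tau>. divergence (\<lambda>y. chi y t) (x \<tau> t))) *
           (perp (chi (x \<theta> t) t) \<bullet> vector_derivative (\<lambda>r. chi (x \<theta> t) r) (at t))) /
      (1 - exp (oint 0 (\<sigma> t) (\<lambda>\<theta>. divergence (\<lambda>y. chi y t) (x \<theta> t))))"
      unfolding E_def Pi_def N0_def xt_def .
  next
    fix \<mu> and S :: "real^2 \<Rightarrow> real \<Rightarrow> real^2^2" and s t
    assume A: "C1_on (D \<times> I) (\<lambda>(y, t). S y t) \<and> (\<forall>y\<in>D. \<forall>t\<in>I. transpose (S y t) = S y t) \<and>
      (\<forall>y\<in>D. \<forall>t\<in>I. chi y t \<bullet> ((S y t - \<mu> *\<^sub>R mat 1) *v chi y t) = 0)"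
      and t: "t \<in> I" and q: "chi (x s t) t \<bullet> (S (x s t) t *v perp (chi (x s t) t)) \<noteq> 0"
    show "perp (chi (x s t) t) \<bullet> vector_derivative (\<lambda>r. chi (x s t) r) (at t) =
      - (chi (x s t) t \<bullet> (vector_derivative (\<lambda>r. S (x s t) r) (at t) *v chi (x s t) t)) /
        (2 * (chi (x s t) t \<bullet> (S (x s t) t *v perp (chi (x s t) t))))"
      using P3[of S \<mu> "x s t" t] A t q x_in_D by blast
  qed
qed

end
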